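(* Assume (A) and (D), and that for some $\omega\ge0$ the potential profile satisfies: for every $c>0$ and $\lambda\ge1$, $\limsup_{s\to0^+}\frac{g(f^{-1}(cs^\lambda))}{g(f^{-1}(s))}\le\lambda^\omega$. Fix $t>0$. Let $\eta,\sigma:[0,\infty)\to(0,\infty)$ be continuous increasing functions with $1/\eta\in L^1((1,\infty),dx)$, $\sigma(r)<r$ for $r\ge1$, $\sup_{r\ge1}f(\sigma(r))/f(r)<\infty$, and such that $r\mapsto\frac{(d-1)\log r+\log\eta(r)}{|\log f(r)|}$ is eventually decreasing with $$b:=\lim_{r\to\infty}\frac{(d-1)\log r+\log\eta(r)}{|\log f(r)|}\in[0,2).$$ Let $H_t(r)=f^2(r)r^{d-1}\eta(r)\exp(\widetilde Ktg(r))$, $\widetilde w_t(r)=g^2(r)\exp(\widetilde Ktg(r))$, $v_t(r)=\widetilde w_t(r)\frac{\eta(r)}{r-\sigma(r)}$. Let $\kappa,\widetilde\kappa>0$, $\alpha_t(u)=(f^2)^{-1}(\kappa/u)$ and $\gamma_t(u)=H_t^{-1}(\widetilde\kappa/u)$ for $u$ large enough, $H_t^{-1}$ being the inverse of $H_t$ restricted to a half-line on which it is continuous and strictly decreasing (such a half-line exists). (a) For every $\varepsilon\in(0,2-b)$ there is $r_\varepsilon>0$ with $f^2(r)\le H_t(r)\le f^{2-b-\varepsilon}(r)$ for $r>r_\varepsilon$; moreover $$1\le\liminf_{u\to\infty}\frac{g(\gamma_t(u))}{g(\alpha_t(u))}\le\limsup_{u\to\infty}\frac{g(\gamma_t(u))}{g(\alpha_t(u))}\le\Big(\frac{2}{2-b}\Big)^{\omega},$$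 and for every $\delta>0$, $\lim_{u\to\infty}\widetilde w_t(\gamma_t(u))/u^\delta=0$. (b) If in addition $\lim_{r\to\infty}\frac{\log\eta(r)-\log(r-\sigma(r))}{g(r)}=0$, then $$\lim_{u\to\infty}\frac{\log\eta(\gamma_t(u))-\log(\gamma_t(u)-\sigma(\gamma_t(u)))}{g(\alpha_t(u))}=0$$ and for every $\delta>0$, $\lim_{u\to\infty}v_t(\gamma_t(u))/u^\delta=0$.
   Context: Setting. Fix $d\ge1$. Let $A$ be a positive semidefinite $d\times d$ matrix and $\nu$ a symmetric Lévy measure on $\mathbb R^d\setminus\{0\}$ (positive Radon measure with $\int(1\wedge|z|^2)\,\nu(dz)<\infty$, $\nu(-B)=\nu(B)$) with $\nu(\mathbb R^d\setminus\{0\})=\infty$, absolutely continuous with density also denoted $\nu(x)$. The Lévy operator $L$ on $L^2(dx)$ is the Fourier multiplier $\widehat{Lh}(\xi)=-\Psi(\xi)\widehat h(\xi)$ with $\Psi(\xi)=\tfrac12A\xi\cdot\xi+\int(1-\cos(\xi\cdot z))\,\nu(dz)$; $\{P_t\}_{t\ge0}$ is the associated convolution semigroup, $P_th(x)=\int p_t(y-x)h(y)\,dy$ with densities $p_t$. Let $V$ be locally bounded on $\mathbb R^d$ with $V(x)\to\infty$ as $|x|\to\infty$, and let $H=-L+V$ (self-adjoint, bounded below, defined via quadratic forms on $L^2(dx)$). For $t>0$, $e^{-tH}$ has a continuous, positive, symmetric kernel $u_t(x,y)$. Let $\lambda_0=\inf\sigma(H)$ (a simple eigenvalue) and $\varphi_0$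 the corresponding strictly positive, continuous, bounded eigenfunction with $\|\varphi_0\|_{L^2(dx)}=1$. Set $\mu(dx)=\varphi_0^2(x)\,dx$ (a probability measure), $q_t(x,y)=\dfrac{e^{\lambda_0t}u_t(x,y)}{\varphi_0(x)\varphi_0(y)}$ and $Q_th(x)=\int q_t(x,y)h(y)\,\mu(dy)$; $\{Q_t\}$ is a semigroup of contractions on every $L^p(\mu)$, $1\le p\le\infty$, and $q_t$ is symmetric. Assumption (A): there exist a strictly decreasing continuous $f:(0,\infty)\to(0,\infty)$, a strictly increasing continuous $g:[0,\infty)\to(0,\infty)$, constants $C_1,C_2\ge1$ and $R_0>0$ such that $C_1^{-1}f(|x|)\le\nu(x)\le C_1f(|x|)$ for $x\ne0$ and $C_2^{-1}g(|x|)\le V(x)\le C_2g(|x|)$ for $|x|\ge R_0$, and moreover: (A1) there is $C_3>0$ with $\int_{\{|x-y|>1,\,|y|>1\}}f(|x-y|)f(|y|)\,dy\le C_3f(|x|)$ for $|x|\ge1$; (A2) $(t,x)\mapsto p_t(x)$ is continuous on $(0,\infty)\times\mathbb R^d$ and for every $t_b>0$ there are $C_4,C_5>0$ with $p_t(x)\le C_4\big([e^{C_5t}f(|x|)]\wedge1\big)$ for $x\neq0$, $t\ge t_b$, and $\sup_{t\in(0,t_b]}\sup_{r\le|x|\le2}p_t(x)<\infty$ for every $r\in(0,1]$; (A3) there is $C_6\ge1$ with $g(r+1)\le C_6g(r)$ for $r\ge R_0$. Under (A), $f$ is a bijection of $(0,\infty)$ onto $(0,\infty)$ and $f^{-1}$,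 $(f^2)^{-1}$ denote the inverses. We write $f_1=f\wedge1$. Condition (D): the map $r\mapsto g(r)/|\log f(r)|$ is eventually decreasing and $\lim_{r\to\infty}g(r)/|\log f(r)|=0$. Heat kernel estimate (a known consequence of (A), used as standing input): for every $T>0$ there exist $\rho>1$, $C=C(T)>0$ and constants $K,\widetilde K>0$ independent of $T$ such that for all $x,y\in\mathbb R^d$ and $t\ge T$, $C^{-1}\max\{1,e^{\lambda_0t}\Gamma(\widetilde Kt,x,y)\}\le q_t(x,y)\le C\max\{1,e^{\lambda_0t}\Gamma(Kt,x,y)\}$, where $\Gamma(\tau,x,y)=\dfrac{\mathbf 1_{\{|x|,|y|>\rho\}}}{f_1(|x|)f_1(|y|)}\displaystyle\int_{\rho-1<|z|<|x|\vee|y|}f_1(|x-z|)f_1(|z-y|)e^{-\tau g(|z|)}\,dz$. Throughout, $K$ and $\widetilde K$ denote fixed constants for which this two-sided estimate holds. *)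

theory Defs
  imports "HOL-Analysis.Analysis"
begin

definition pos_inv :: "(real \<Rightarrow> real) \<Rightarrow> real \<Rightarrow> real" where
  "pos_inv h s = inv_into {0<..} h s"

definition H_fun :: "nat \<Rightarrow> real \<Rightarrow> real \<Rightarrow> (real \<Rightarrow> real) \<Rightarrow> (real \<Rightarrow> real) \<Rightarrow> (real \<Rightarrow> real) \<Rightarrow> real \<Rightarrow> real" where
  "H_fun d Kt t f g \<eta> r = (f r)^2 * r^(d - 1) * \<eta> r * exp (Kt * t * g r)"

definition w_fun :: "real \<Rightarrow> real \<Rightarrow> (real \<Rightarrow> real) \<Rightarrow> real \<Rightarrow> real" where
  "w_fun Kt t g r = (g r)^2 * exp (Kt * t * g r)"

definition v_fun :: "real \<Rightarrow> real \<Rightarrow> (real \<Rightarrow> real) \<Rightarrow> (real \<Rightarrow> real) \<Rightarrow> (real \<Rightarrow> real) \<Rightarrow> real \<Rightarrow> real" where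
  "v_fun Kt t g \<eta> \<sigma> r = w_fun Kt t g r * \<eta> r / (r - \<sigma> r)"

end

theory Submission
  imports Defs "HOL-Real_Asymp.Real_Asymp"
begin

theorem lemma5p1:
  fixes f g \<eta> \<sigma> :: "real \<Rightarrow> real"
    and Kt t \<omega> b \<kappa> \<kappa>' R0 :: real
    and X :: "'a::euclidean_space itself"
  defines "d \<equiv> DIM('a)"
  assumes
    \<comment> \<open>(A): properties of the profile f of the Levy density\<close>
    f_pos: "\<And>r. r > 0 \<Longrightarrow> f r > 0"
    and f_cont: "continuous_on {0<..} f"
    and f_decr: "strict_antimono_on {0<..} f"
    and f_bij: "bij_betw f {0<..} {0<..}"
    and f_levy: "(\<integral>\<^sup>+ z. indicator (- {0}) z * ennreal (min 1 ((norm z)^2) * f (norm z))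
                   \<partial>(lborel :: 'a measure)) < \<infinity>"
    and f_inf: "(\<integral>\<^sup>+ z. indicator (- {0}) z * ennreal (f (norm z)) \<partial>(lborel :: 'a measure)) = \<infinity>"
    \<comment> \<open>(A1)\<close>
    and A1: "\<exists>C3>0. \<forall>x::'a. norm x \<ge> 1 \<longrightarrow>
               (\<integral>\<^sup>+ y. indicator {y. norm (x - y) > 1 \<and> norm y > 1} y
                   * ennreal (f (norm (x - y)) * f (norm y)) \<partial>(lborel :: 'a measure))
               \<le> ennreal (C3 * f (norm x))"
    \<comment> \<open>(A): properties of the profile g of the potential, and (A3)\<close>
    and g_pos: "\<And>r. r \<ge> 0 \<Longrightarrow> g r > 0"
    and g_cont: "continuous_on {0..} g"
    and g_incr: "strict_mono_on {0..} g"
    and R0_pos: "R0 > 0"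
    and A3: "\<exists>C6\<ge>1. \<forall>r\<ge>R0. g (r + 1) \<le> C6 * g r"
    \<comment> \<open>(D)\<close>
    and D_mono: "\<exists>r0. \<forall>r\<ge>r0. \<forall>s\<ge>r. g s / \<bar>ln (f s)\<bar> \<le> g r / \<bar>ln (f r)\<bar>"
    and D_lim: "((\<lambda>r. g r / \<bar>ln (f r)\<bar>) \<longlongrightarrow> 0) at_top"
    \<comment> \<open>the constant Ktilde of the heat kernel lower bound\<close>
    and Kt_pos: "Kt > 0"
    \<comment> \<open>growth condition with exponent omega\<close>
    and omega_nonneg: "\<omega> \<ge> 0"
    and omega_cond: "\<And>c l. c > 0 \<Longrightarrow> l \<ge> 1 \<Longrightarrow>
        Limsup (at_right 0) (\<lambda>s. ereal (g (pos_inv f (c * s powr l)) / g (pos_inv f s)))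
          \<le> ereal (l powr \<omega>)"
    and t_pos: "t > 0"
    \<comment> \<open>eta and sigma\<close>
    and eta_pos: "\<And>r. r \<ge> 0 \<Longrightarrow> \<eta> r > 0"
    and eta_cont: "continuous_on {0..} \<eta>"
    and eta_mono: "mono_on {0..} \<eta>"
    and eta_L1: "set_integrable lborel {1<..} (\<lambda>x. 1 / \<eta> x)"
    and sigma_pos: "\<And>r. r \<ge> 0 \<Longrightarrow> \<sigma> r > 0"
    and sigma_cont: "continuous_on {0..} \<sigma>"
    and sigma_mono: "mono_on {0..} \<sigma>"
    and sigma_less: "\<And>r. r \<ge> 1 \<Longrightarrow> \<sigma> r < r"
    and sigma_bdd: "\<exists>M. \<forall>r\<ge>1. f (\<sigma> r) / f r \<le> M"
    and b_mono: "\<exists>r0. \<forall>r\<ge>r0. \<forall>s\<ge>r.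
        ((real d - 1) * ln s + ln (\<eta> s)) / \<bar>ln (f s)\<bar>
          \<le> ((real d - 1) * ln r + ln (\<eta> r)) / \<bar>ln (f r)\<bar>"
    and b_lim: "((\<lambda>r. ((real d - 1) * ln r + ln (\<eta> r)) / \<bar>ln (f r)\<bar>) \<longlongrightarrow> b) at_top"
    and b_range: "0 \<le> b" "b < 2"
    and kappa_pos: "\<kappa> > 0" "\<kappa>' > 0"
  shows
    \<comment> \<open>existence of a half-line on which H_t is continuous and strictly decreasing\<close>
    "(\<exists>R1. continuous_on {R1..} (H_fun d Kt t f g \<eta>)
           \<and> strict_antimono_on {R1..} (H_fun d Kt t f g \<eta>))
     \<and> (\<forall>R1. continuous_on {R1..} (H_fun d Kt t f g \<eta>)
           \<and> strict_antimono_on {R1..} (H_fun d Kt t f g \<eta>) \<longrightarrow>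
       (let H = H_fun d Kt t f g \<eta>;
            \<alpha> = (\<lambda>u. pos_inv (\<lambda>r. (f r)^2) (\<kappa> / u));
            \<gamma> = (\<lambda>u. inv_into {R1..} H (\<kappa>' / u))
        in
        \<comment> \<open>(a)\<close>
        (\<forall>\<epsilon>. 0 < \<epsilon> \<and> \<epsilon> < 2 - b \<longrightarrow>
           (\<exists>r\<epsilon>>0. \<forall>r>r\<epsilon>. (f r)^2 \<le> H r \<and> H r \<le> f r powr (2 - b - \<epsilon>)))
        \<and> 1 \<le> Liminf at_top (\<lambda>u. ereal (g (\<gamma> u) / g (\<alpha> u)))
        \<and> Liminf at_top (\<lambda>u. ereal (g (\<gamma> u) / g (\<alpha> u)))
            \<le> Limsup at_top (\<lambda>u. ereal (g (\<gamma> u) / g (\<alpha> u)))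
        \<and> Limsup at_top (\<lambda>u. ereal (g (\<gamma> u) / g (\<alpha> u))) \<le> ereal ((2 / (2 - b)) powr \<omega>)
        \<and> (\<forall>\<delta>>0. ((\<lambda>u. w_fun Kt t g (\<gamma> u) / u powr \<delta>) \<longlongrightarrow> 0) at_top)
        \<comment> \<open>(b)\<close>
        \<and> (((\<lambda>r. (ln (\<eta> r) - ln (r - \<sigma> r)) / g r) \<longlongrightarrow> 0) at_top \<longrightarrow>
             ((\<lambda>u. (ln (\<eta> (\<gamma> u)) - ln (\<gamma> u - \<sigma> (\<gamma> u))) / g (\<alpha> u)) \<longlongrightarrow> 0) at_top
           \<and> (\<forall>\<delta>>0. ((\<lambda>u. v_fun Kt t g \<eta> \<sigma> (\<gamma> u) / u powr \<delta>) \<longlongrightarrow> 0) at_top))))"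
proof -
  define H where "H = H_fun d Kt t f g \<eta>"
  define finv where "finv = pos_inv f"
  define Bf where "Bf r = ((real d - 1) * ln r + ln (\<eta> r)) / \<bar>ln (f r)\<bar>" for r
  define Gf where "Gf r = g r / \<bar>ln (f r)\<bar>" for r
  define Q where "Q r = 2 - Bf r - Kt * t * Gf r" for r
  have d_pos: "d \<ge> 1" unfolding d_def using DIM_positive[where 'a='a] by linarith
  have Ktt: "Kt * t > 0" using Kt_pos t_pos by simp
  have Hpos: "H r > 0" if "r > 0" for r
    unfolding H_def H_fun_def using f_pos[OF that] eta_pos[of r] that by simp
  have finv: "finv s > 0 \<and> f (finv s) = s" if "s > 0" for s
  proof -
    have "s \<in> f ` {0<..}" using f_bij that by (simp add: bij_betw_def)
    then show ?thesis unfolding finv_def pos_inv_def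
      using inv_into_into[of s f "{0<..}"] f_inv_into_f[of s f "{0<..}"] by auto
  qed
  have f_anti: "f s < f r" if "0 < r" "r < s" for r s
    using f_decr that by (auto simp: monotone_on_def)
  have f_less_iff: "f r < f s \<longleftrightarrow> s < r" if "r > 0" "s > 0" for r s
    using f_anti[of r s] f_anti[of s r] that by (cases r s rule: linorder_cases) auto
  have f_le_iff: "f r \<le> f s \<longleftrightarrow> s \<le> r" if "r > 0" "s > 0" for r s
    using f_less_iff[of s r] that by (auto simp: not_less[symmetric])
  have g_le: "g r \<le> g s" if "0 \<le> r" "r \<le> s" for r s
  proof (cases "r = s")
    case False
    then have "g r < g s" using g_incr that by (auto simp: monotone_on_def)
    then show ?thesis by simp
  qed simp
  have f_lim: "(f \<longlongrightarrow> 0) at_top"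
  proof (rule order_tendstoI)
    fix a :: real assume a: "a < 0"
    show "eventually (\<lambda>x. a < f x) at_top"
      using eventually_gt_at_top[of 0] by (rule eventually_mono) (use f_pos a in force)
  next
    fix a :: real assume a: "0 < a"
    have "eventually (\<lambda>x. x > finv a) at_top" by simp
    then show "eventually (\<lambda>x. f x < a) at_top"
      by (rule eventually_mono) (use finv[OF a] f_anti in metis)
  qed
  have f_ev_lt1: "eventually (\<lambda>r. f r < 1) at_top"
    using order_tendstoD(2)[OF f_lim, of 1] by simp
  have Q_lim: "(Q \<longlongrightarrow> 2 - b) at_top"
  proof -
    have "((\<lambda>r. 2 - Bf r - Kt * t * Gf r) \<longlongrightarrow> 2 - b - Kt * t * 0) at_top"
      unfolding Bf_def Gf_def by (intro tendsto_intros b_lim D_lim)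
    then show ?thesis unfolding Q_def[abs_def] by simp
  qed
  have lnH: "ln (H r) = - \<bar>ln (f r)\<bar> * Q r" if r: "r > 0" "f r < 1" for r
  proof -
    have fr: "f r > 0" using f_pos r by simp
    have lnf: "ln (f r) < 0" using fr r by simp
    have er: "\<eta> r > 0" using eta_pos r by simp
    have "ln (H r) = ln ((f r)^2) + ln (r^(d - 1)) + ln (\<eta> r) + Kt * t * g r"
      unfolding H_def H_fun_def using fr er r by (simp add: ln_mult)
    also have "\<dots> = 2 * ln (f r) + (real d - 1) * ln r + ln (\<eta> r) + Kt * t * g r"
      using fr r d_pos by (simp add: ln_realpow of_nat_diff)
    also have "\<dots> = - \<bar>ln (f r)\<bar> * Q r"
      using lnf unfolding Q_def Bf_def Gf_def by (simp add: field_simps)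
    finally show ?thesis .
  qed
  have eta_ge1: "\<exists>N. \<forall>r\<ge>N. \<eta> r \<ge> 1"
  proof (rule ccontr)
    assume neg: "\<not> ?thesis"
    have lt: "\<eta> r < 1" if "r \<ge> 0" for r
    proof -
      obtain r' where "r' \<ge> r" "\<eta> r' < 1" using neg by (auto simp: not_le)
      moreover have "\<eta> r \<le> \<eta> r'" using eta_mono that \<open>r' \<ge> r\<close> by (auto simp: mono_on_def)
      ultimately show ?thesis by simp
    qed
    have "integrable lborel (\<lambda>x::real. indicator {1<..} x *\<^sub>R (1::real))"
    proof (rule Bochner_Integration.integrable_bound[OF eta_L1[unfolded set_integrable_def]])
      show "(\<lambda>x::real. indicator {1<..} x *\<^sub>R (1::real)) \<in> borel_measurable lborel" by simp
      show "AE x in lborel. norm (indicator {1<..} x *\<^sub>R (1::real)) \<le> norm (indicator {1<..} x *\<^sub>R (1 / \<eta> x))"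
      proof (rule AE_I2)
        fix x :: real
        show "norm (indicator {1<..} x *\<^sub>R (1::real)) \<le> norm (indicator {1<..} x *\<^sub>R (1 / \<eta> x))"
        proof (cases "x > 1")
          case True
          then have "0 < \<eta> x" "\<eta> x < 1" using lt eta_pos by auto
          then show ?thesis using True by (simp add: indicator_def)
        qed (simp add: indicator_def)
      qed
    qed
    then have fin: "emeasure lborel {1::real<..} < \<infinity>"
      using integrable_indicator_iff[of lborel "{1::real<..}"] by simp
    then obtain m where m: "emeasure lborel {1::real<..} = ennreal m" "m \<ge> 0"
      using ennreal_cases less_top by (metis infinity_ennreal_def less_irrefl)
    have "emeasure lborel {2::real .. m + 3} \<le> emeasure lborel {1::real<..}"
      by (rule emeasure_mono) auto
    then have "ennreal (m + 1) \<le> ennreal m" using m by simp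
    then show False using m by (simp add: ennreal_le_iff)
  qed
  have partA: "eventually (\<lambda>r. (f r)^2 \<le> H r \<and> H r \<le> f r powr (2 - b - \<epsilon>)) at_top"
    if eps: "0 < \<epsilon>" "\<epsilon> < 2 - b" for \<epsilon>
  proof -
    have "eventually (\<lambda>r. Q r > 2 - b - \<epsilon>) at_top" by (rule order_tendstoD(1)[OF Q_lim]) (use eps in simp)
    moreover have "eventually (\<lambda>r::real. r \<ge> 1) at_top" by (rule eventually_ge_at_top)
    moreover note f_ev_lt1
    moreover have "eventually (\<lambda>r. \<eta> r \<ge> 1) at_top"
      using eta_ge1 by (auto simp: eventually_at_top_linorder)
    ultimately show ?thesis
    proof eventually_elim
      case (elim r)
      have fr: "f r > 0" using f_pos elim by simp
      have lnf: "ln (f r) < 0" using fr elim by simp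
      have "1 \<le> r ^ (d - 1)" using elim by (simp add: one_le_power)
      moreover have "1 \<le> exp (Kt * t * g r)" using Ktt g_pos[of r] elim by simp
      ultimately have "1 \<le> r ^ (d - 1) * \<eta> r * exp (Kt * t * g r)"
        using elim by (metis mult_mono' mult_1 zero_le_one)
      then have "(f r)^2 * 1 \<le> (f r)^2 * (r ^ (d - 1) * \<eta> r * exp (Kt * t * g r))"
        by (intro mult_left_mono) auto
      then have low: "(f r)^2 \<le> H r" unfolding H_def H_fun_def by (simp add: mult.assoc)
      have "ln (H r) = - \<bar>ln (f r)\<bar> * Q r" using lnH elim by simp
      also have "\<dots> \<le> - \<bar>ln (f r)\<bar> * (2 - b - \<epsilon>)"
        using elim lnf by (intro mult_left_mono_neg) auto
      also have "\<dots> = ln (f r powr (2 - b - \<epsilon>))" using lnf fr by (simp add: ln_powr)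
      finally have lnle: "ln (H r) \<le> ln (f r powr (2 - b - \<epsilon>))" .
      have "0 < f r powr (2 - b - \<epsilon>)" using fr by simp
      then have "H r \<le> f r powr (2 - b - \<epsilon>)"
        using lnle Hpos[of r] elim ln_le_cancel_iff[of "H r" "f r powr (2 - b - \<epsilon>)"] by simp
      with low show ?case by simp
    qed
  qed
  have key: "((\<lambda>r. exp (A * g r) * H r powr \<delta>) \<longlongrightarrow> 0) at_top"
    if A: "A > 0" and dl: "\<delta> > 0" for A \<delta>
  proof -
    define c where "c = \<delta> * (2 - b) / 4"
    have c: "c > 0" using dl b_range unfolding c_def by simp
    have e1: "eventually (\<lambda>r. H r \<le> f r powr ((2 - b) / 2)) at_top"
    proof -
      have eq: "2 - b - (2 - b) / 2 = ((2 - b) / 2 :: real)" by (simp add: field_simps)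
      have "eventually (\<lambda>r. (f r)^2 \<le> H r \<and> H r \<le> f r powr ((2 - b)/2)) at_top"
        using partA[of "(2 - b)/2"] b_range unfolding eq by simp
      then show ?thesis by (rule eventually_mono) simp
    qed
    have "eventually (\<lambda>r. Gf r < c / A) at_top"
      using D_lim c A unfolding Gf_def by (intro order_tendstoD(2)) auto
    moreover note e1 f_ev_lt1
    moreover have "eventually (\<lambda>r::real. r > 0) at_top" by (rule eventually_gt_at_top)
    ultimately have bnd: "eventually (\<lambda>r. exp (A * g r) * H r powr \<delta> \<le> f r powr c) at_top"
    proof eventually_elim
      case (elim r)
      have fr: "f r > 0" using f_pos elim by simp
      have lnf: "ln (f r) < 0" using fr elim by simp
      have "g r < c / A * \<bar>ln (f r)\<bar>" using elim lnf unfolding Gf_def by (simp add: field_simps)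
      then have "A * g r \<le> c * \<bar>ln (f r)\<bar>" using A by (simp add: field_simps)
      then have "exp (A * g r) \<le> exp (c * \<bar>ln (f r)\<bar>)" by simp
      also have "\<dots> = f r powr (- c)" using lnf fr by (simp add: powr_def)
      finally have ex: "exp (A * g r) \<le> f r powr (- c)" .
      have "H r powr \<delta> \<le> (f r powr ((2 - b) / 2)) powr \<delta>"
        using elim Hpos[of r] dl by (intro powr_mono2) auto
      also have "\<dots> = f r powr (2 * c)"
      proof -
        have eq2: "(2 - b) / 2 * \<delta> = 2 * c" unfolding c_def by (simp add: field_simps)
        show ?thesis by (simp only: powr_powr eq2)
      qed
      finally have hp: "H r powr \<delta> \<le> f r powr (2 * c)" .
      have "exp (A * g r) * H r powr \<delta> \<le> f r powr (- c) * f r powr (2 * c)"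
        using ex hp by (intro mult_mono) auto
      also have "\<dots> = f r powr c" by (simp add: powr_add[symmetric])
      finally show ?case .
    qed
    have lim: "((\<lambda>r. f r powr c) \<longlongrightarrow> 0) at_top"
      by (rule tendsto_zero_powrI[OF f_lim tendsto_const]) (use f_pos c in \<open>auto intro: eventually_mono[OF eventually_gt_at_top[of 0]] less_imp_le\<close>)
    show ?thesis
      by (rule tendsto_sandwich[OF _ bnd tendsto_const lim]) auto
  qed
  have H_lim: "(H \<longlongrightarrow> 0) at_top"
  proof (rule tendsto_sandwich[OF _ _ tendsto_const key[of 1 1]])
    show "eventually (\<lambda>r. 0 \<le> H r) at_top"
      using eventually_gt_at_top[of 0] by (rule eventually_mono) (use Hpos in force)
    show "eventually (\<lambda>r. H r \<le> exp (1 * g r) * H r powr 1) at_top"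
    proof (rule eventually_mono[OF eventually_gt_at_top[of 0]])
      fix r :: real assume r: "r > 0"
      have Hr: "H r > 0" using Hpos r by simp
      moreover have "1 \<le> exp (1 * g r)" using g_pos[of r] r by simp
      ultimately show "H r \<le> exp (1 * g r) * H r powr 1"
        using mult_right_mono[of 1 "exp (1 * g r)" "H r"] by simp
    qed
  qed auto
  have exR1: "\<exists>R1. continuous_on {R1..} H \<and> strict_antimono_on {R1..} H"
  proof -
    obtain r1 where r1: "\<forall>r\<ge>r1. \<forall>s\<ge>r. g s / \<bar>ln (f s)\<bar> \<le> g r / \<bar>ln (f r)\<bar>"
      using D_mono by blast
    obtain r2 where r2: "\<forall>r\<ge>r2. \<forall>s\<ge>r.
        ((real d - 1) * ln s + ln (\<eta> s)) / \<bar>ln (f s)\<bar>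
          \<le> ((real d - 1) * ln r + ln (\<eta> r)) / \<bar>ln (f r)\<bar>"
      using b_mono by blast
    have "eventually (\<lambda>r. Q r > 0) at_top"
      by (rule order_tendstoD(1)[OF Q_lim]) (use b_range in simp)
    then have "eventually (\<lambda>r. f r < 1 \<and> Q r > 0) at_top" using f_ev_lt1 by eventually_elim simp
    then obtain r3 where r3: "\<forall>r\<ge>r3. f r < 1 \<and> Q r > 0" by (auto simp: eventually_at_top_linorder)
    define R where "R = max 1 (max r1 (max r2 r3))"
    have Qmono: "Q r \<le> Q s" if "R \<le> r" "r \<le> s" for r s
    proof -
      have "Bf s \<le> Bf r" using r2 that unfolding Bf_def R_def by auto
      moreover have "Gf s \<le> Gf r" using r1 that unfolding Gf_def R_def by auto
      then have "Kt * t * Gf s \<le> Kt * t * Gf r" using Ktt by (intro mult_left_mono) auto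
      ultimately show ?thesis unfolding Q_def by simp
    qed
    have anti: "H s < H r" if "R \<le> r" "r < s" for r s
    proof -
      have rr: "r > 0" "f r < 1" "Q r > 0" using that r3 unfolding R_def by auto
      have ss: "s > 0" "f s < 1" using that r3 unfolding R_def by auto
      have "f s < f r" using f_anti rr ss that by simp
      then have "ln (f s) < ln (f r)" using f_pos rr ss by simp
      moreover have "ln (f r) < 0" using f_pos rr by simp
      ultimately have L: "\<bar>ln (f r)\<bar> < \<bar>ln (f s)\<bar>" by simp
      have "\<bar>ln (f r)\<bar> * Q r < \<bar>ln (f s)\<bar> * Q r" using L rr by (intro mult_strict_right_mono) auto
      also have "\<dots> \<le> \<bar>ln (f s)\<bar> * Q s" using Qmono[of r s] that by (intro mult_left_mono) auto
      finally have "ln (H s) < ln (H r)" using lnH rr ss by simp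
      then show ?thesis using Hpos rr ss by simp
    qed
    have "continuous_on {R..} H"
    proof -
      have "continuous_on {R..} f" by (rule continuous_on_subset[OF f_cont]) (auto simp: R_def)
      moreover have "continuous_on {R..} \<eta>" by (rule continuous_on_subset[OF eta_cont]) (auto simp: R_def)
      moreover have "continuous_on {R..} g" by (rule continuous_on_subset[OF g_cont]) (auto simp: R_def)
      ultimately show ?thesis unfolding H_def H_fun_def by (intro continuous_intros) auto
    qed
    moreover have "strict_antimono_on {R..} H"
      by (rule monotone_onI) (use anti in auto)
    ultimately show ?thesis by blast
  qed
  have alpha_eq: "pos_inv (\<lambda>r. (f r)^2) (\<kappa> / u) = finv (sqrt (\<kappa> / u))" if u: "u > 0" for u
  proof -
    have pos: "\<kappa>/u > 0" using kappa_pos u by simp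
    have inj: "inj_on (\<lambda>r. (f r)^2) {0<..}"
    proof (rule inj_onI)
      fix x y :: real assume xy: "x \<in> {0<..}" "y \<in> {0<..}" "(f x)^2 = (f y)^2"
      then have "f x = f y" using f_pos by (simp add: power2_eq_iff_nonneg less_imp_le)
      then show "x = y" using f_anti[of x y] f_anti[of y x] xy by (cases x y rule: linorder_cases) auto
    qed
    show ?thesis unfolding pos_inv_def
      by (rule inv_into_f_eq[OF inj]) (use finv[of "sqrt(\<kappa>/u)"] pos in auto)
  qed
  show ?thesis
    unfolding Let_def H_def[symmetric]
    apply (rule conjI[OF exR1])
    apply (intro allI impI)
    subgoal premises R1 for R1
    proof -
      define \<gamma> where "\<gamma> u = inv_into {R1..} H (\<kappa>'/u)" for u
      define \<alpha> where "\<alpha> u = pos_inv (\<lambda>r. (f r)^2) (\<kappa>/u)" for u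
      have Hanti: "H s < H r" if "R1 \<le> r" "r < s" for r s
        using R1 that by (auto simp: monotone_on_def)
      have Hcont: "continuous_on {R1..} H" using R1 by simp
      define a where "a = max R1 1"
      have Ha: "H a > 0" using Hpos a_def by simp
      have \<gamma>_ev: "eventually (\<lambda>u. \<gamma> u \<ge> R1 \<and> H (\<gamma> u) = \<kappa>'/u) at_top"
      proof -
        have "eventually (\<lambda>u. u > \<kappa>'/H a) at_top" by (rule eventually_gt_at_top)
        then show ?thesis
        proof (rule eventually_mono)
          fix u assume u: "u > \<kappa>'/H a"
          have u0: "u > 0" using u Ha kappa_pos by (smt (verit) divide_pos_pos)
          define y where "y = \<kappa>'/u"
          have y: "0 < y" "y < H a" using u u0 Ha kappa_pos unfolding y_def
            by (auto simp: field_simps)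
          obtain N where N: "\<forall>r\<ge>N. H r < y"
            using order_tendstoD(2)[OF H_lim y(1)] by (auto simp: eventually_at_top_linorder)
          define R where "R = max N a"
          have "H R \<le> y" using N by (simp add: R_def less_imp_le)
          moreover have "continuous_on {a..R} H"
            by (rule continuous_on_subset[OF Hcont]) (auto simp: a_def)
          ultimately have "\<exists>x. a \<le> x \<and> x \<le> R \<and> H x = y"
            using y by (intro IVT2') (auto simp: R_def)
          then obtain x where x: "x \<ge> a" "H x = y" by auto
          then have "y \<in> H ` {R1..}" using a_def by force
          then show "\<gamma> u \<ge> R1 \<and> H (\<gamma> u) = \<kappa>'/u"
            unfolding \<gamma>_def y_def[symmetric]
            using inv_into_into[of y H "{R1..}"] f_inv_into_f[of y H "{R1..}"] by auto
        qed
      qed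
      have \<gamma>_top: "filterlim \<gamma> at_top at_top"
        unfolding filterlim_at_top
      proof
        fix Z :: real
        define M where "M = max Z a"
        have HM: "H M > 0" using Hpos M_def a_def by simp
        have "eventually (\<lambda>u. u > \<kappa>'/H M) at_top" by (rule eventually_gt_at_top)
        then show "eventually (\<lambda>u. Z \<le> \<gamma> u) at_top" using \<gamma>_ev
        proof eventually_elim
          case (elim u)
          have u0: "u > 0" using elim HM kappa_pos by (smt (verit) divide_pos_pos)
          have lt: "\<kappa>'/u < H M" using elim u0 HM by (auto simp: field_simps)
          show ?case
          proof (rule ccontr)
            assume "\<not> Z \<le> \<gamma> u"
            then have "\<gamma> u < M" unfolding M_def by simp
            then have "H M < H (\<gamma> u)" using Hanti[of "\<gamma> u" M] elim by simp
            then show False using lt elim by simp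
          qed
        qed
      qed
      have ev_\<gamma>: "eventually (\<lambda>u. P (\<gamma> u)) at_top" if "eventually P at_top" for P
        using \<gamma>_top that unfolding filterlim_iff by blast
      have e_a: "eventually (\<lambda>r. (f r)^2 \<le> H r) at_top"
        using partA[of "(2 - b)/2"] b_range by (auto elim: eventually_mono)
      have ev1: "eventually (\<lambda>u. u > 0 \<and> \<gamma> u \<ge> max R1 1 \<and> H (\<gamma> u) = \<kappa>'/u \<and> (f (\<gamma> u))^2 \<le> H (\<gamma> u)) at_top"
        using \<gamma>_ev eventually_gt_at_top[of 0] ev_\<gamma>[OF eventually_ge_at_top[of "max R1 1"]] ev_\<gamma>[OF e_a]
        by eventually_elim auto
      have alpha: "\<alpha> u = finv (sqrt (\<kappa>/u)) \<and> \<alpha> u > 0 \<and> f (\<alpha> u) = sqrt (\<kappa>/u)" if "u > 0" for u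
        using alpha_eq[OF that] finv[of "sqrt (\<kappa>/u)"] that kappa_pos unfolding \<alpha>_def by simp
      have partA': "\<forall>\<epsilon>. 0 < \<epsilon> \<and> \<epsilon> < 2 - b \<longrightarrow>
           (\<exists>r\<epsilon>>0. \<forall>r>r\<epsilon>. (f r)^2 \<le> H r \<and> H r \<le> f r powr (2 - b - \<epsilon>))"
      proof (intro allI impI)
        fix \<epsilon> :: real assume "0 < \<epsilon> \<and> \<epsilon> < 2 - b"
        then obtain N where N: "\<forall>r\<ge>N. (f r)^2 \<le> H r \<and> H r \<le> f r powr (2 - b - \<epsilon>)"
          using partA[of \<epsilon>] by (auto simp: eventually_at_top_linorder)
        show "\<exists>r\<epsilon>>0. \<forall>r>r\<epsilon>. (f r)^2 \<le> H r \<and> H r \<le> f r powr (2 - b - \<epsilon>)"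
          by (rule exI[of _ "max N 1"]) (use N in auto)
      qed
      have sq_lim: "filterlim (\<lambda>u. sqrt (c / u)) (at_right 0) at_top" if "c > 0" for c :: real
        using that by real_asymp
      have lower: "1 \<le> Liminf at_top (\<lambda>u. ereal (g (\<gamma> u) / g (\<alpha> u)))"
        unfolding le_Liminf_iff
      proof (intro allI impI)
        fix y :: ereal assume y: "y < 1"
        show "eventually (\<lambda>u. y < ereal (g (\<gamma> u) / g (\<alpha> u))) at_top"
        proof (cases "y \<le> 0")
          case True
          show ?thesis using ev1
          proof (rule eventually_mono)
            fix u assume u: "0 < u \<and> max R1 1 \<le> \<gamma> u \<and> H (\<gamma> u) = \<kappa>' / u \<and> (f (\<gamma> u))\<^sup>2 \<le> H (\<gamma> u)"
            have "\<alpha> u > 0" using alpha[of u] u by blast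
            then have "g (\<gamma> u) / g (\<alpha> u) > 0" using g_pos u by simp
            then show "y < ereal (g (\<gamma> u) / g (\<alpha> u))" using True
              by (metis ereal_less(2) le_less_trans)
          qed
        next
          case False
          then obtain y0 where y0: "y = ereal y0" "0 < y0" "y0 < 1" using y by (cases y) auto
          define c1 where "c1 = sqrt (\<kappa>/\<kappa>')"
          have c1: "c1 > 0" using kappa_pos by (simp add: c1_def)
          have "Limsup (at_right 0) (\<lambda>s. ereal (g (pos_inv f (c1 * s powr 1)) / g (pos_inv f s))) \<le> ereal (1 powr \<omega>)"
            by (rule omega_cond) (use c1 in auto)
          also have "\<dots> < ereal (1/y0)" using y0 by simp
          finally have "eventually (\<lambda>s. ereal (g (pos_inv f (c1 * s powr 1)) / g (pos_inv f s)) < ereal (1/y0)) (at_right 0)"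
            by (rule Limsup_lessD)
          then have ev2: "eventually (\<lambda>u. g (finv (c1 * sqrt(\<kappa>'/u) powr 1)) / g (finv (sqrt (\<kappa>'/u))) < 1/y0) at_top"
            using sq_lim[of \<kappa>'] kappa_pos unfolding finv_def filterlim_iff by auto
          show ?thesis using ev2 ev1
          proof eventually_elim
            case (elim u)
            define s where "s = sqrt(\<kappa>'/u)"
            have s: "s > 0" using elim kappa_pos by (simp add: s_def)
            have cs: "c1 * s powr 1 = sqrt (\<kappa>/u)"
              using s kappa_pos elim by (simp add: c1_def s_def real_sqrt_mult[symmetric])
            have au: "\<alpha> u = finv (sqrt(\<kappa>/u))" "\<alpha> u > 0" using alpha[of u] elim by blast+
            have bp: "finv s > 0" "f (finv s) = s" using finv s by auto
            have "f (\<gamma> u) \<le> s" unfolding s_def using elim by (intro real_le_rsqrt) simp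
            then have "finv s \<le> \<gamma> u" using f_le_iff[of "\<gamma> u" "finv s"] bp elim by simp
            then have gb: "g (finv s) \<le> g (\<gamma> u)" using bp by (intro g_le) auto
            have ga: "g (\<alpha> u) > 0" "g (finv s) > 0" using g_pos au bp by auto
            have "g (\<alpha> u) / g (finv s) < 1 / y0" using elim cs au unfolding s_def by simp
            then have "y0 * g (\<alpha> u) < g (finv s)" using ga y0 by (simp add: field_simps)
            then have "y0 * g (\<alpha> u) < g (\<gamma> u)" using gb by simp
            then have "y0 < g (\<gamma> u) / g (\<alpha> u)" using ga by (simp add: field_simps)
            then show ?case using y0 by simp
          qed
        qed
      qed
      have LL: "Liminf at_top (\<lambda>u. ereal (g (\<gamma> u) / g (\<alpha> u)))
            \<le> Limsup at_top (\<lambda>u. ereal (g (\<gamma> u) / g (\<alpha> u)))"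
        by (rule Liminf_le_Limsup) simp
      have upper: "Limsup at_top (\<lambda>u. ereal (g (\<gamma> u) / g (\<alpha> u))) \<le> ereal ((2 / (2 - b)) powr \<omega>)"
        unfolding Limsup_le_iff
      proof (intro allI impI)
        fix y :: ereal assume y: "y > ereal ((2/(2-b)) powr \<omega>)"
        show "eventually (\<lambda>u. ereal (g (\<gamma> u) / g (\<alpha> u)) < y) at_top"
        proof (cases y)
          case PInf then show ?thesis by simp
        next
          case MInf then show ?thesis using y by simp
        next
          case (real y0)
          then have y0: "(2/(2-b)) powr \<omega> < y0" using y by simp
          have tl: "((\<lambda>e. (2/(2-b-e)) powr \<omega>) \<longlongrightarrow> (2/(2-b-0)) powr \<omega>) (at_right 0)"
            using b_range by (intro tendsto_intros) auto
          have "eventually (\<lambda>e. (2/(2-b-e)) powr \<omega> < y0) (at_right 0)"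
            using order_tendstoD(2)[OF tl, of y0] y0 by simp
          moreover have "eventually (\<lambda>e. e < 2 - b) (at_right (0::real))"
            unfolding eventually_at_right_field using b_range by (intro exI[of _ "2 - b"]) auto
          ultimately have "eventually (\<lambda>e. (2/(2-b-e)) powr \<omega> < y0 \<and> e < 2 - b) (at_right (0::real))"
            by eventually_elim simp
          then obtain e0 where e0: "e0 > 0" "\<forall>e>0. e < e0 \<longrightarrow> (2/(2-b-e)) powr \<omega> < y0 \<and> e < 2 - b"
            unfolding eventually_at_right_field by auto
          define \<epsilon> where "\<epsilon> = e0/2"
          have eps: "0 < \<epsilon>" "\<epsilon> < 2-b" "(2/(2-b-\<epsilon>)) powr \<omega> < y0"
            using e0(1) e0(2)[rule_format, of "e0/2"] unfolding \<epsilon>_def by auto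
          define lam where "lam = 2/(2-b-\<epsilon>)"
          define c2 where "c2 = (\<kappa>'/\<kappa>) powr (1/(2-b-\<epsilon>))"
          have lam: "lam \<ge> 1" using eps b_range unfolding lam_def by (simp add: field_simps)
          have c2: "c2 > 0" using kappa_pos unfolding c2_def by simp
          have "Limsup (at_right 0) (\<lambda>s. ereal (g (pos_inv f (c2 * s powr lam)) / g (pos_inv f s))) \<le> ereal (lam powr \<omega>)"
            by (rule omega_cond) (use c2 lam in auto)
          also have "\<dots> < ereal y0" using eps unfolding lam_def by simp
          finally have "eventually (\<lambda>s. ereal (g (pos_inv f (c2 * s powr lam)) / g (pos_inv f s)) < ereal y0) (at_right 0)"
            by (rule Limsup_lessD)
          then have ev3: "eventually (\<lambda>u. g (finv (c2 * sqrt(\<kappa>/u) powr lam)) / g (finv (sqrt (\<kappa>/u))) < y0) at_top"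
            using sq_lim[of \<kappa>] kappa_pos unfolding finv_def filterlim_iff by auto
          have ev4: "eventually (\<lambda>u. H (\<gamma> u) \<le> f (\<gamma> u) powr (2 - b - \<epsilon>)) at_top"
            using ev_\<gamma>[OF partA[OF eps(1,2)]] by (auto elim: eventually_mono)
          show ?thesis using ev3 ev4 ev1
          proof eventually_elim
            case (elim u)
            define s where "s = sqrt(\<kappa>/u)"
            have s: "s > 0" using elim kappa_pos by (simp add: s_def)
            have au: "\<alpha> u = finv s" "\<alpha> u > 0" using alpha[of u] elim unfolding s_def by blast+
            define e' where "e' = 2 - b - \<epsilon>"
            have e': "e' > 0" using eps unfolding e'_def by simp
            have fg: "f (\<gamma> u) > 0" using f_pos elim by simp
            have "\<kappa>'/u \<le> f (\<gamma> u) powr e'" using elim unfolding e'_def by simp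
            then have "(\<kappa>'/u) powr (1/e') \<le> (f (\<gamma> u) powr e') powr (1/e')"
              using e' kappa_pos elim by (intro powr_mono2) auto
            also have "\<dots> = f (\<gamma> u)" using e' fg by (simp add: powr_powr)
            finally have le1: "(\<kappa>'/u) powr (1/e') \<le> f (\<gamma> u)" .
            have eqk: "(\<kappa>'/u) = (\<kappa>'/\<kappa>) * (\<kappa>/u)" using kappa_pos by simp
            have "(\<kappa>'/u) powr (1/e') = c2 * (\<kappa>/u) powr (1/e')"
              unfolding c2_def e'_def[symmetric] by (subst eqk, rule powr_mult)
            also have "(\<kappa>/u) powr (1/e') = s powr lam"
            proof -
              have "s powr lam = ((\<kappa>/u) powr (1/2)) powr lam"
                unfolding s_def using kappa_pos elim by (simp add: powr_half_sqrt)
              also have "\<dots> = (\<kappa>/u) powr (1/e')"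
                unfolding powr_powr lam_def e'_def by simp
              finally show ?thesis by simp
            qed
            finally have le2: "c2 * s powr lam \<le> f (\<gamma> u)" using le1 by simp
            have cp: "c2 * s powr lam > 0" using c2 s by simp
            have bp: "finv (c2 * s powr lam) > 0" "f (finv (c2 * s powr lam)) = c2 * s powr lam"
              using finv[OF cp] by auto
            have "\<gamma> u \<le> finv (c2 * s powr lam)"
              using f_le_iff[of "finv (c2 * s powr lam)" "\<gamma> u"] bp le2 elim by simp
            then have gb: "g (\<gamma> u) \<le> g (finv (c2 * s powr lam))" using elim by (intro g_le) auto
            have ga: "g (\<alpha> u) > 0" using g_pos au by auto
            have "g (\<gamma> u) / g (\<alpha> u) \<le> g (finv (c2 * s powr lam)) / g (\<alpha> u)"
              using gb ga by (intro divide_right_mono) auto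
            also have "\<dots> < y0" using elim au unfolding s_def by simp
            finally show ?case using real by simp
          qed
        qed
      qed
      have gen: "((\<lambda>u. F (\<gamma> u) / u powr \<delta>) \<longlongrightarrow> 0) at_top"
        if dl: "\<delta> > 0" and A: "A > 0"
          and FB: "eventually (\<lambda>r. 0 \<le> F r \<and> F r \<le> exp (A * g r)) at_top" for F A \<delta>
      proof -
        have lim: "((\<lambda>u. exp (A * g (\<gamma> u)) * H (\<gamma> u) powr \<delta> / \<kappa>' powr \<delta>) \<longlongrightarrow> 0) at_top"
          by (rule tendsto_divide_zero[OF filterlim_compose[OF key[OF A dl] \<gamma>_top]])
        have "eventually (\<lambda>u. norm (F (\<gamma> u) / u powr \<delta>)
                 \<le> exp (A * g (\<gamma> u)) * H (\<gamma> u) powr \<delta> / \<kappa>' powr \<delta>) at_top"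
          using ev1 ev_\<gamma>[OF FB]
        proof eventually_elim
          case (elim u)
          define r where "r = \<gamma> u"
          have Hr: "H r > 0" using Hpos[of r] elim unfolding r_def by simp
          have ueq: "u = \<kappa>' / H r" using elim Hr unfolding r_def by (simp add: field_simps)
          have upow: "u powr \<delta> = \<kappa>' powr \<delta> / H r powr \<delta>" unfolding ueq by (rule powr_divide)
          have kp: "\<kappa>' powr \<delta> > 0" using kappa_pos by simp
          have hp: "H r powr \<delta> > 0" using Hr by simp
          have F0: "0 \<le> F r" "F r \<le> exp (A * g r)" using elim unfolding r_def by auto
          have "norm (F r / u powr \<delta>) = F r * H r powr \<delta> / \<kappa>' powr \<delta>"
            using F0 kp hp unfolding upow by simp
          also have "\<dots> \<le> exp (A * g r) * H r powr \<delta> / \<kappa>' powr \<delta>"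
            using F0 kp hp by (intro divide_right_mono mult_right_mono) auto
          finally show ?case unfolding r_def .
        qed
        then show ?thesis by (rule Lim_null_comparison[OF _ lim])
      qed
      have wlim: "\<forall>\<delta>>0. ((\<lambda>u. w_fun Kt t g (\<gamma> u) / u powr \<delta>) \<longlongrightarrow> 0) at_top"
      proof (intro allI impI)
        fix \<delta> :: real assume dl: "\<delta> > 0"
        show "((\<lambda>u. w_fun Kt t g (\<gamma> u) / u powr \<delta>) \<longlongrightarrow> 0) at_top"
        proof (rule gen[OF dl, of "2 + Kt * t"])
          show "2 + Kt * t > 0" using Ktt by simp
          show "eventually (\<lambda>r. 0 \<le> w_fun Kt t g r \<and> w_fun Kt t g r \<le> exp ((2 + Kt * t) * g r)) at_top"
          proof (rule eventually_mono[OF eventually_ge_at_top[of 0]])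
            fix r :: real assume r: "r \<ge> 0"
            have gp: "g r > 0" using g_pos r by simp
            have "(g r)^2 \<le> (exp (g r))^2" using gp order_trans[OF _ exp_ge_add_one_self[of "g r"], of "g r"] by (intro power_mono) auto
            also have "\<dots> = exp (2 * g r)" by (simp add: exp_double[symmetric] power2_eq_square exp_add[symmetric])
            finally have "(g r)^2 * exp (Kt * t * g r) \<le> exp (2 * g r) * exp (Kt * t * g r)"
              by (intro mult_right_mono) auto
            also have "\<dots> = exp ((2 + Kt * t) * g r)" by (simp add: exp_add[symmetric] algebra_simps)
            finally show "0 \<le> w_fun Kt t g r \<and> w_fun Kt t g r \<le> exp ((2 + Kt * t) * g r)"
              unfolding w_fun_def by simp
          qed
        qed
      qed
      have blim: "((\<lambda>r. (ln (\<eta> r) - ln (r - \<sigma> r)) / g r) \<longlongrightarrow> 0) at_top \<longrightarrow>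
             ((\<lambda>u. (ln (\<eta> (\<gamma> u)) - ln (\<gamma> u - \<sigma> (\<gamma> u))) / g (\<alpha> u)) \<longlongrightarrow> 0) at_top
           \<and> (\<forall>\<delta>>0. ((\<lambda>u. v_fun Kt t g \<eta> \<sigma> (\<gamma> u) / u powr \<delta>) \<longlongrightarrow> 0) at_top)"
      proof (intro impI conjI allI)
        assume hb: "((\<lambda>r. (ln (\<eta> r) - ln (r - \<sigma> r)) / g r) \<longlongrightarrow> 0) at_top"
        define Y where "Y = (2/(2-b)) powr \<omega> + 1"
        have "Limsup at_top (\<lambda>u. ereal (g (\<gamma> u) / g (\<alpha> u))) < ereal Y"
          using upper unfolding Y_def by (rule le_less_trans) simp
        then have evY: "eventually (\<lambda>u. ereal (g (\<gamma> u) / g (\<alpha> u)) < ereal Y) at_top"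
          by (rule Limsup_lessD)
        have Y0: "Y > 0" unfolding Y_def by (smt (verit) powr_ge_zero)
        have lim1: "((\<lambda>u. \<bar>(ln (\<eta> (\<gamma> u)) - ln (\<gamma> u - \<sigma> (\<gamma> u))) / g (\<gamma> u)\<bar> * Y) \<longlongrightarrow> 0) at_top"
          by (intro tendsto_mult_left_zero tendsto_rabs_zero filterlim_compose[OF hb \<gamma>_top])
        show "((\<lambda>u. (ln (\<eta> (\<gamma> u)) - ln (\<gamma> u - \<sigma> (\<gamma> u))) / g (\<alpha> u)) \<longlongrightarrow> 0) at_top"
        proof (rule Lim_null_comparison[OF _ lim1])
          show "eventually (\<lambda>u. norm ((ln (\<eta> (\<gamma> u)) - ln (\<gamma> u - \<sigma> (\<gamma> u))) / g (\<alpha> u))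
              \<le> \<bar>(ln (\<eta> (\<gamma> u)) - ln (\<gamma> u - \<sigma> (\<gamma> u))) / g (\<gamma> u)\<bar> * Y) at_top"
            using evY ev1
          proof eventually_elim
            case (elim u)
            define q where "q = ln (\<eta> (\<gamma> u)) - ln (\<gamma> u - \<sigma> (\<gamma> u))"
            have ga: "g (\<alpha> u) > 0" using g_pos alpha[of u] elim by auto
            have gg: "g (\<gamma> u) > 0" using g_pos elim by auto
            have rat: "g (\<gamma> u) / g (\<alpha> u) < Y" using elim by simp
            have "norm (q / g (\<alpha> u)) = \<bar>q / g (\<gamma> u)\<bar> * (g (\<gamma> u) / g (\<alpha> u))"
              using ga gg by (simp add: abs_divide)
            also have "\<dots> \<le> \<bar>q / g (\<gamma> u)\<bar> * Y" using rat by (intro mult_left_mono) auto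
            finally show ?case unfolding q_def .
          qed
        qed
      next
        fix \<delta> :: real
        assume hb: "((\<lambda>r. (ln (\<eta> r) - ln (r - \<sigma> r)) / g r) \<longlongrightarrow> 0) at_top" and dl: "\<delta> > 0"
        show "((\<lambda>u. v_fun Kt t g \<eta> \<sigma> (\<gamma> u) / u powr \<delta>) \<longlongrightarrow> 0) at_top"
        proof (rule gen[OF dl, of "3 + Kt * t"])
          show "3 + Kt * t > 0" using Ktt by simp
          have "eventually (\<lambda>r. (ln (\<eta> r) - ln (r - \<sigma> r)) / g r < 1) at_top"
            by (rule order_tendstoD(2)[OF hb]) simp
          then show "eventually (\<lambda>r. 0 \<le> v_fun Kt t g \<eta> \<sigma> r \<and> v_fun Kt t g \<eta> \<sigma> r \<le> exp ((3 + Kt * t) * g r)) at_top"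
            using eventually_ge_at_top[of 1]
          proof eventually_elim
            case (elim r)
            have gp: "g r > 0" using g_pos elim by simp
            have ep: "\<eta> r > 0" using eta_pos elim by simp
            have sp: "r - \<sigma> r > 0" using sigma_less elim by simp
            have "(g r)^2 \<le> (exp (g r))^2" using gp order_trans[OF _ exp_ge_add_one_self[of "g r"], of "g r"] by (intro power_mono) auto
            also have "\<dots> = exp (2 * g r)" by (simp add: exp_double[symmetric] power2_eq_square exp_add[symmetric])
            finally have w: "w_fun Kt t g r \<le> exp ((2 + Kt * t) * g r)"
              unfolding w_fun_def using mult_right_mono[of "(g r)^2" "exp (2 * g r)" "exp (Kt * t * g r)"]
              by (simp add: exp_add[symmetric] algebra_simps)
            have w0: "0 \<le> w_fun Kt t g r" unfolding w_fun_def by simp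
            have "ln (\<eta> r) - ln (r - \<sigma> r) < g r" using elim gp by (simp add: field_simps)
            then have "exp (ln (\<eta> r) - ln (r - \<sigma> r)) \<le> exp (g r)" by simp
            then have q: "\<eta> r / (r - \<sigma> r) \<le> exp (g r)" using ep sp by (simp add: exp_diff)
            have "v_fun Kt t g \<eta> \<sigma> r = w_fun Kt t g r * (\<eta> r / (r - \<sigma> r))"
              unfolding v_fun_def by simp
            also have "\<dots> \<le> exp ((2 + Kt * t) * g r) * exp (g r)"
              using w w0 q ep sp by (intro mult_mono) auto
            also have "\<dots> = exp ((3 + Kt * t) * g r)" by (simp add: exp_add[symmetric] algebra_simps)
            finally show ?case using w0 ep sp unfolding v_fun_def by simp
          qed
        qed
      qed
      have main: "(\<forall>\<epsilon>. 0 < \<epsilon> \<and> \<epsilon> < 2 - b \<longrightarrow>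
           (\<exists>r\<epsilon>>0. \<forall>r>r\<epsilon>. (f r)^2 \<le> H r \<and> H r \<le> f r powr (2 - b - \<epsilon>)))
        \<and> 1 \<le> Liminf at_top (\<lambda>u. ereal (g (\<gamma> u) / g (\<alpha> u)))
        \<and> Liminf at_top (\<lambda>u. ereal (g (\<gamma> u) / g (\<alpha> u)))
            \<le> Limsup at_top (\<lambda>u. ereal (g (\<gamma> u) / g (\<alpha> u)))
        \<and> Limsup at_top (\<lambda>u. ereal (g (\<gamma> u) / g (\<alpha> u))) \<le> ereal ((2 / (2 - b)) powr \<omega>)
        \<and> (\<forall>\<delta>>0. ((\<lambda>u. w_fun Kt t g (\<gamma> u) / u powr \<delta>) \<longlongrightarrow> 0) at_top)
        \<and> (((\<lambda>r. (ln (\<eta> r) - ln (r - \<sigma> r)) / g r) \<longlongrightarrow> 0) at_top \<longrightarrow>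
             ((\<lambda>u. (ln (\<eta> (\<gamma> u)) - ln (\<gamma> u - \<sigma> (\<gamma> u))) / g (\<alpha> u)) \<longlongrightarrow> 0) at_top
           \<and> (\<forall>\<delta>>0. ((\<lambda>u. v_fun Kt t g \<eta> \<sigma> (\<gamma> u) / u powr \<delta>) \<longlongrightarrow> 0) at_top))"
        using partA' lower LL upper wlim blim by blast
      show ?thesis using main unfolding \<gamma>_def \<alpha>_def .
    qed
    done
qed

end
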